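(* (1) Let $(\mathcal T,(N_B,R_B),(N_A,R_A),\mathbb D,\zeta)$ be an object of $\overline{\mathrm{RArr}}(\mathcal B,\mathcal A)$, i.e. $\mathbb D=(D,\Delta,\varepsilon)$ is a comonad on $\mathcal B$ and $(R_B,\zeta)$ is a comonad arrow from $\mathbb D$ to $N_AR_A$ such that $\bar\zeta:=(\epsilon^BN_AR_AN_B)\circ(N_B\zeta N_B)\circ(N_BD\eta^B):N_BD\to N_AR_AN_B$ is invertible. Then $(\mathcal T,(N_A,R_A),(N_B,R_B),\tau)$ is a pre-torsor, where $\tau=(R_AN_BR_B\bar\zeta)\circ(R_AN_B\eta^BD)\circ(R_A\bar\zeta^{-1})\circ(\eta^AR_AN_B)$. (2) If $(F,t)$ is a morphism in $\overline{\mathrm{RArr}}(\mathcal B,\mathcal A)$ between two such objects, then $F$ is a morphism between the corresponding pre-torsors of (1).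
   Context: Conventions: $\circ$ vertical composition, juxtaposition horizontal composition; a functor's name denotes its identity transformation. Adjunctions $(N_A:\mathcal A\to\mathcal T,R_A)$, $(N_B:\mathcal B\to\mathcal T,R_B)$ with units $\eta^A,\eta^B$, counits $\epsilon^A,\epsilon^B$; $N_AR_A$ is a comonad with comultiplication $N_A\eta^AR_A$ and counit $\epsilon^A$. A comonad arrow $(R_B,\zeta)$ from $\mathbb D$ to $N_AR_A$ means $\zeta:DR_B\to R_BN_AR_A$ with $(R_B\epsilon^A)\circ\zeta=\varepsilon R_B$, $(R_BN_A\eta^AR_A)\circ\zeta=(\zeta N_AR_A)\circ(D\zeta)\circ(\Delta R_B)$. Pre-torsor: $\tau:R_AN_B\to R_AN_BR_BN_AR_AN_B$ with $(R_AN_BR_B\epsilon^AN_B)\circ\tau=R_AN_B\eta^B$, $(R_A\epsilon^BN_AR_AN_B)\circ\tau=\eta^AR_AN_B$, $(R_AN_BR_BN_A\tau)\circ\tau=(\tau R_BN_AR_AN_B)\circ\tau$. For $F:\mathcal T'\to\mathcal T$ with $R_AF=R'_A$, $R_BF=R'_B$ put $a=(\epsilon^AFN'_A)\circ(N_A\eta'^A)$, $b=(\epsilon^BFN'_B)\circ(N_B\eta'^B)$. A pre-torsor morphism is such $F$ with $(R_AbR_BaR_Ab)\circ\tau=\tau'\circ(R_Ab)$. A morphism in $\overline{\mathrm{RArr}}(\mathcal B,\mathcal A)$ is $(F,t)$ with $F$ such a functor and $t:\mathbb D\to\mathbb D'$ a comonad morphism with $(R_BaR'_A)\circ(\zeta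 F)=\zeta'\circ(tR'_B)$. *)

theory Defs
  imports Main
begin

record ('o,'a) cat =
  cobj :: "'o set"
  carr :: "'a set"
  cdom :: "'a \<Rightarrow> 'o"
  ccod :: "'a \<Rightarrow> 'o"
  ccomp :: "'a \<Rightarrow> 'a \<Rightarrow> 'a"   (* ccomp C g f = g o f *)
  cid :: "'o \<Rightarrow> 'a"

definition hom :: "('o,'a) cat \<Rightarrow> 'o \<Rightarrow> 'o \<Rightarrow> 'a set" where
  "hom C x y = {f \<in> carr C. cdom C f = x \<and> ccod C f = y}"

definition is_category :: "('o,'a) cat \<Rightarrow> bool" where
  "is_category C \<longleftrightarrow>
     (\<forall>f\<in>carr C. cdom C f \<in> cobj C \<and> ccod C f \<in> cobj C) \<and>
     (\<forall>x\<in>cobj C. cid C x \<in> hom C x x) \<and>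
     (\<forall>f\<in>carr C. \<forall>g\<in>carr C. ccod C f = cdom C g \<longrightarrow>
         ccomp C g f \<in> hom C (cdom C f) (ccod C g)) \<and>
     (\<forall>f\<in>carr C. ccomp C (cid C (ccod C f)) f = f \<and> ccomp C f (cid C (cdom C f)) = f) \<and>
     (\<forall>f\<in>carr C. \<forall>g\<in>carr C. \<forall>h\<in>carr C. ccod C f = cdom C g \<longrightarrow> ccod C g = cdom C h \<longrightarrow>
         ccomp C h (ccomp C g f) = ccomp C (ccomp C h g) f)"

definition is_iso :: "('o,'a) cat \<Rightarrow> 'a \<Rightarrow> bool" where
  "is_iso C f \<longleftrightarrow> f \<in> carr C \<and>
     (\<exists>g\<in>hom C (ccod C f) (cdom C f).
        ccomp C g f = cid C (cdom C f) \<and> ccomp C f g = cid C (ccod C f))"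

definition inv_arr :: "('o,'a) cat \<Rightarrow> 'a \<Rightarrow> 'a" where
  "inv_arr C f = (THE g. g \<in> hom C (ccod C f) (cdom C f) \<and>
        ccomp C g f = cid C (cdom C f) \<and> ccomp C f g = cid C (ccod C f))"

record ('o1,'a1,'o2,'a2) ftor =
  fo :: "'o1 \<Rightarrow> 'o2"
  fa :: "'a1 \<Rightarrow> 'a2"

definition fcomp :: "('o2,'a2,'o3,'a3) ftor \<Rightarrow> ('o1,'a1,'o2,'a2) ftor \<Rightarrow> ('o1,'a1,'o3,'a3) ftor" where
  "fcomp G F = \<lparr>fo = fo G \<circ> fo F, fa = fa G \<circ> fa F\<rparr>"

definition fid :: "('o,'a,'o,'a) ftor" where
  "fid = \<lparr>fo = (\<lambda>x. x), fa = (\<lambda>f. f)\<rparr>"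

definition is_functor :: "('o1,'a1) cat \<Rightarrow> ('o2,'a2) cat \<Rightarrow> ('o1,'a1,'o2,'a2) ftor \<Rightarrow> bool" where
  "is_functor C D F \<longleftrightarrow> is_category C \<and> is_category D \<and>
     (\<forall>x\<in>cobj C. fo F x \<in> cobj D) \<and>
     (\<forall>f\<in>carr C. fa F f \<in> hom D (fo F (cdom C f)) (fo F (ccod C f))) \<and>
     (\<forall>x\<in>cobj C. fa F (cid C x) = cid D (fo F x)) \<and>
     (\<forall>f\<in>carr C. \<forall>g\<in>carr C. ccod C f = cdom C g \<longrightarrow>
         fa F (ccomp C g f) = ccomp D (fa F g) (fa F f))"

definition is_nt :: "('o1,'a1) cat \<Rightarrow> ('o2,'a2) cat \<Rightarrow> ('o1,'a1,'o2,'a2) ftor \<Rightarrow>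
     ('o1,'a1,'o2,'a2) ftor \<Rightarrow> ('o1 \<Rightarrow> 'a2) \<Rightarrow> bool" where
  "is_nt C D F G \<alpha> \<longleftrightarrow> is_functor C D F \<and> is_functor C D G \<and>
     (\<forall>x\<in>cobj C. \<alpha> x \<in> hom D (fo F x) (fo G x)) \<and>
     (\<forall>f\<in>carr C. ccomp D (\<alpha> (ccod C f)) (fa F f) = ccomp D (fa G f) (\<alpha> (cdom C f)))"

definition is_adj :: "('oa,'aa) cat \<Rightarrow> ('ot,'at) cat \<Rightarrow> ('oa,'aa,'ot,'at) ftor \<Rightarrow>
     ('ot,'at,'oa,'aa) ftor \<Rightarrow> ('oa \<Rightarrow> 'aa) \<Rightarrow> ('ot \<Rightarrow> 'at) \<Rightarrow> bool" where
  "is_adj A T N R eta eps \<longleftrightarrow>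
     is_functor A T N \<and> is_functor T A R \<and>
     is_nt A A fid (fcomp R N) eta \<and> is_nt T T (fcomp N R) fid eps \<and>
     (\<forall>x\<in>cobj A. ccomp T (eps (fo N x)) (fa N (eta x)) = cid T (fo N x)) \<and>
     (\<forall>y\<in>cobj T. ccomp A (fa R (eps y)) (eta (fo R y)) = cid A (fo R y))"

definition is_comonad :: "('o,'a) cat \<Rightarrow> ('o,'a,'o,'a) ftor \<Rightarrow> ('o \<Rightarrow> 'a) \<Rightarrow> ('o \<Rightarrow> 'a) \<Rightarrow> bool" where
  "is_comonad B D Delta eps \<longleftrightarrow>
     is_functor B B D \<and> is_nt B B D (fcomp D D) Delta \<and> is_nt B B D fid eps \<and>
     (\<forall>x\<in>cobj B. ccomp B (eps (fo D x)) (Delta x) = cid B (fo D x)) \<and>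
     (\<forall>x\<in>cobj B. ccomp B (fa D (eps x)) (Delta x) = cid B (fo D x)) \<and>
     (\<forall>x\<in>cobj B. ccomp B (fa D (Delta x)) (Delta x) = ccomp B (Delta (fo D x)) (Delta x))"

definition is_comonad_mor :: "('o,'a) cat \<Rightarrow> ('o,'a,'o,'a) ftor \<Rightarrow> ('o \<Rightarrow> 'a) \<Rightarrow> ('o \<Rightarrow> 'a) \<Rightarrow>
     ('o,'a,'o,'a) ftor \<Rightarrow> ('o \<Rightarrow> 'a) \<Rightarrow> ('o \<Rightarrow> 'a) \<Rightarrow> ('o \<Rightarrow> 'a) \<Rightarrow> bool" where
  "is_comonad_mor B D Delta eps D' Delta' eps' t \<longleftrightarrow>
     is_nt B B D D' t \<and>
     (\<forall>x\<in>cobj B. ccomp B (eps' x) (t x) = eps x) \<and>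
     (\<forall>x\<in>cobj B. ccomp B (Delta' x) (t x) =
        ccomp B (ccomp B (t (fo D' x)) (fa D (t x))) (Delta x))"

record ('oa,'aa,'ob,'ab,'ot,'at) adjdata =
  rT :: "('ot,'at) cat"
  rNA :: "('oa,'aa,'ot,'at) ftor"
  rRA :: "('ot,'at,'oa,'aa) ftor"
  rEtaA :: "'oa \<Rightarrow> 'aa"
  rEpsA :: "'ot \<Rightarrow> 'at"
  rNB :: "('ob,'ab,'ot,'at) ftor"
  rRB :: "('ot,'at,'ob,'ab) ftor"
  rEtaB :: "'ob \<Rightarrow> 'ab"
  rEpsB :: "'ot \<Rightarrow> 'at"

record ('oa,'aa,'ob,'ab,'ot,'at) rarr = "('oa,'aa,'ob,'ab,'ot,'at) adjdata" +
  rD :: "('ob,'ab,'ob,'ab) ftor"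
  rDelta :: "'ob \<Rightarrow> 'ab"
  rEps :: "'ob \<Rightarrow> 'ab"
  rZeta :: "'ot \<Rightarrow> 'ab"

definition pre_torsor :: "('oa,'aa) cat \<Rightarrow> ('ob,'ab) cat \<Rightarrow>
     ('oa,'aa,'ob,'ab,'ot,'at,'z) adjdata_scheme \<Rightarrow> ('ob \<Rightarrow> 'aa) \<Rightarrow> bool" where
  "pre_torsor A B P tau \<longleftrightarrow>
     (let T = rT P; NA = rNA P; RA = rRA P; NB = rNB P; RB = rRB P in
     is_adj A T NA RA (rEtaA P) (rEpsA P) \<and>
     is_adj B T NB RB (rEtaB P) (rEpsB P) \<and>
     is_nt B A (fcomp RA NB) (fcomp RA (fcomp NB (fcomp RB (fcomp NA (fcomp RA NB))))) tau \<and>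
     (\<forall>b\<in>cobj B.
        ccomp A (fa RA (fa NB (fa RB (rEpsA P (fo NB b))))) (tau b) = fa RA (fa NB (rEtaB P b)) \<and>
        ccomp A (fa RA (rEpsB P (fo NA (fo RA (fo NB b))))) (tau b) = rEtaA P (fo RA (fo NB b)) \<and>
        ccomp A (fa RA (fa NB (fa RB (fa NA (tau b))))) (tau b) =
          ccomp A (tau (fo RB (fo NA (fo RA (fo NB b))))) (tau b)))"

definition zbar :: "('oa,'aa,'ob,'ab,'ot,'at,'z) rarr_scheme \<Rightarrow> 'ob \<Rightarrow> 'at" where
  "zbar X b = ccomp (rT X) (rEpsB X (fo (rNA X) (fo (rRA X) (fo (rNB X) b))))
      (ccomp (rT X) (fa (rNB X) (rZeta X (fo (rNB X) b)))
                    (fa (rNB X) (fa (rD X) (rEtaB X b))))"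

definition tau_of :: "('oa,'aa) cat \<Rightarrow> ('oa,'aa,'ob,'ab,'ot,'at,'z) rarr_scheme \<Rightarrow> 'ob \<Rightarrow> 'aa" where
  "tau_of A X b =
     (let T = rT X; RA = rRA X; NB = rNB X; RB = rRB X in
      ccomp A (fa RA (fa NB (fa RB (zbar X b))))
       (ccomp A (fa RA (fa NB (rEtaB X (fo (rD X) b))))
         (ccomp A (fa RA (inv_arr T (zbar X b)))
                  (rEtaA X (fo RA (fo NB b))))))"

definition comonad_arrow :: "('oa,'aa) cat \<Rightarrow> ('ob,'ab) cat \<Rightarrow>
     ('oa,'aa,'ob,'ab,'ot,'at,'z) rarr_scheme \<Rightarrow> bool" where
  "comonad_arrow A B X \<longleftrightarrow>
     (let T = rT X; NA = rNA X; RA = rRA X; RB = rRB X; D = rD X; zeta = rZeta X in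
      is_nt T B (fcomp D RB) (fcomp RB (fcomp NA RA)) zeta \<and>
      (\<forall>y\<in>cobj T. ccomp B (fa RB (rEpsA X y)) (zeta y) = rEps X (fo RB y)) \<and>
      (\<forall>y\<in>cobj T. ccomp B (fa RB (fa NA (rEtaA X (fo RA y)))) (zeta y) =
          ccomp B (zeta (fo NA (fo RA y))) (ccomp B (fa D (zeta y)) (rDelta X (fo RB y)))))"

definition rarr_obj :: "('oa,'aa) cat \<Rightarrow> ('ob,'ab) cat \<Rightarrow>
     ('oa,'aa,'ob,'ab,'ot,'at,'z) rarr_scheme \<Rightarrow> bool" where
  "rarr_obj A B X \<longleftrightarrow>
     is_adj A (rT X) (rNA X) (rRA X) (rEtaA X) (rEpsA X) \<and>
     is_adj B (rT X) (rNB X) (rRB X) (rEtaB X) (rEpsB X) \<and>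
     is_comonad B (rD X) (rDelta X) (rEps X) \<and>
     comonad_arrow A B X \<and>
     (\<forall>b\<in>cobj B. is_iso (rT X) (zbar X b))"

definition a_of :: "('oa,'aa,'ob,'ab,'ot,'at,'z) adjdata_scheme \<Rightarrow>
     ('oa,'aa,'ob,'ab,'ot2,'at2,'z2) adjdata_scheme \<Rightarrow> ('ot2,'at2,'ot,'at) ftor \<Rightarrow> 'oa \<Rightarrow> 'at" where
  "a_of P P' F x = ccomp (rT P) (rEpsA P (fo F (fo (rNA P') x))) (fa (rNA P) (rEtaA P' x))"

definition b_of :: "('oa,'aa,'ob,'ab,'ot,'at,'z) adjdata_scheme \<Rightarrow>
     ('oa,'aa,'ob,'ab,'ot2,'at2,'z2) adjdata_scheme \<Rightarrow> ('ot2,'at2,'ot,'at) ftor \<Rightarrow> 'ob \<Rightarrow> 'at" where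
  "b_of P P' F x = ccomp (rT P) (rEpsB P (fo F (fo (rNB P') x))) (fa (rNB P) (rEtaB P' x))"

definition compatible_functor :: "('oa,'aa,'ob,'ab,'ot,'at,'z) adjdata_scheme \<Rightarrow>
     ('oa,'aa,'ob,'ab,'ot2,'at2,'z2) adjdata_scheme \<Rightarrow> ('ot2,'at2,'ot,'at) ftor \<Rightarrow> bool" where
  "compatible_functor P P' F \<longleftrightarrow>
     is_functor (rT P') (rT P) F \<and>
     (\<forall>y\<in>cobj (rT P'). fo (rRA P) (fo F y) = fo (rRA P') y \<and> fo (rRB P) (fo F y) = fo (rRB P') y) \<and>
     (\<forall>f\<in>carr (rT P'). fa (rRA P) (fa F f) = fa (rRA P') f \<and> fa (rRB P) (fa F f) = fa (rRB P') f)"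

text \<open>Pre-torsor morphism: (R_A b R_B a R_A b) o tau = tau' o (R_A b); the horizontal
  composite is written componentwise.\<close>
definition pretorsor_mor :: "('oa,'aa) cat \<Rightarrow> ('ob,'ab) cat \<Rightarrow>
     ('oa,'aa,'ob,'ab,'ot,'at,'z) adjdata_scheme \<Rightarrow> ('ob \<Rightarrow> 'aa) \<Rightarrow>
     ('oa,'aa,'ob,'ab,'ot2,'at2,'z2) adjdata_scheme \<Rightarrow> ('ob \<Rightarrow> 'aa) \<Rightarrow>
     ('ot2,'at2,'ot,'at) ftor \<Rightarrow> bool" where
  "pretorsor_mor A B P tau P' tau' F \<longleftrightarrow>
     compatible_functor P P' F \<and>
     (let RA = rRA P; NB = rNB P; RB = rRB P; NA = rNA P;
          RA' = rRA P'; NB' = rNB P'; RB' = rRB P'; NA' = rNA P';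
          a = a_of P P' F; b = b_of P P' F in
      \<forall>x\<in>cobj B.
        ccomp A
          (ccomp A (fa RA (b (fo RB' (fo NA' (fo RA' (fo NB' x))))))
            (ccomp A (fa RA (fa NB (fa RB (a (fo RA' (fo NB' x))))))
                     (fa RA (fa NB (fa RB (fa NA (fa RA (b x))))))))
          (tau x)
        = ccomp A (tau' x) (fa RA (b x)))"

definition rarr_mor :: "('oa,'aa) cat \<Rightarrow> ('ob,'ab) cat \<Rightarrow>
     ('oa,'aa,'ob,'ab,'ot,'at,'z) rarr_scheme \<Rightarrow> ('oa,'aa,'ob,'ab,'ot2,'at2,'z2) rarr_scheme \<Rightarrow>
     ('ot2,'at2,'ot,'at) ftor \<Rightarrow> ('ob \<Rightarrow> 'ab) \<Rightarrow> bool" where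
  "rarr_mor A B X X' F t \<longleftrightarrow>
     rarr_obj A B X \<and> rarr_obj A B X' \<and>
     compatible_functor X X' F \<and>
     is_comonad_mor B (rD X) (rDelta X) (rEps X) (rD X') (rDelta X') (rEps X') t \<and>
     (\<forall>y\<in>cobj (rT X').
        ccomp B (fa (rRB X) (a_of X X' F (fo (rRA X') y))) (rZeta X (fo F y))
        = ccomp B (rZeta X' y) (t (fo (rRB X') y)))"

end

theory Submission
  imports Defs
begin


lemma fcomp_simps[simp]: "fo (fcomp G F) x = fo G (fo F x)" "fa (fcomp G F) f = fa G (fa F f)"
  by (simp_all add: fcomp_def)
lemma fid_simps[simp]: "fo fid x = x" "fa fid f = f" by (simp_all add: fid_def)

locale category = fixes C :: "('o,'a) cat" assumes cat: "is_category C"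
begin
lemma dom_obj[simp]: "f \<in> carr C \<Longrightarrow> cdom C f \<in> cobj C" using cat by (auto simp: is_category_def)
lemma cod_obj[simp]: "f \<in> carr C \<Longrightarrow> ccod C f \<in> cobj C" using cat by (auto simp: is_category_def)
lemma id_arr[simp]: "x \<in> cobj C \<Longrightarrow> cid C x \<in> carr C" using cat by (auto simp: is_category_def hom_def)
lemma dom_id[simp]: "x \<in> cobj C \<Longrightarrow> cdom C (cid C x) = x" using cat by (auto simp: is_category_def hom_def)
lemma cod_id[simp]: "x \<in> cobj C \<Longrightarrow> ccod C (cid C x) = x" using cat by (auto simp: is_category_def hom_def)
lemma comp_arr[simp]: "f \<in> carr C \<Longrightarrow> g \<in> carr C \<Longrightarrow> ccod C f = cdom C g \<Longrightarrow> ccomp C g f \<in> carr C"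
  using cat unfolding is_category_def hom_def by blast
lemma dom_comp[simp]: "f \<in> carr C \<Longrightarrow> g \<in> carr C \<Longrightarrow> ccod C f = cdom C g \<Longrightarrow> cdom C (ccomp C g f) = cdom C f"
  using cat unfolding is_category_def hom_def by blast
lemma cod_comp[simp]: "f \<in> carr C \<Longrightarrow> g \<in> carr C \<Longrightarrow> ccod C f = cdom C g \<Longrightarrow> ccod C (ccomp C g f) = ccod C g"
  using cat unfolding is_category_def hom_def by blast
lemma id_left[simp]: "f \<in> carr C \<Longrightarrow> ccod C f = x \<Longrightarrow> ccomp C (cid C x) f = f"
  using cat unfolding is_category_def by blast
lemma id_right[simp]: "f \<in> carr C \<Longrightarrow> cdom C f = x \<Longrightarrow> ccomp C f (cid C x) = f"
  using cat unfolding is_category_def by blast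
lemma assoc[simp]: "f \<in> carr C \<Longrightarrow> g \<in> carr C \<Longrightarrow> h \<in> carr C \<Longrightarrow> ccod C f = cdom C g \<Longrightarrow> ccod C g = cdom C h \<Longrightarrow>
   ccomp C (ccomp C h g) f = ccomp C h (ccomp C g f)"
  using cat unfolding is_category_def by metis
lemma ctx_unused: "ccomp C p q = ccomp C r s \<Longrightarrow> p \<in> carr C \<Longrightarrow> q \<in> carr C \<Longrightarrow> r \<in> carr C \<Longrightarrow> s \<in> carr C \<Longrightarrow> k \<in> carr C \<Longrightarrow>
   ccod C q = cdom C p \<Longrightarrow> ccod C s = cdom C r \<Longrightarrow> ccod C k = cdom C q \<Longrightarrow> cdom C s = cdom C q \<Longrightarrow>
   ccomp C p (ccomp C q k) = ccomp C r (ccomp C s k)"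
  by (metis assoc)
lemma ctxr: "ccomp C p q = R \<Longrightarrow> p \<in> carr C \<Longrightarrow> q \<in> carr C \<Longrightarrow> k \<in> carr C \<Longrightarrow>
   ccod C q = cdom C p \<Longrightarrow> ccod C k = cdom C q \<Longrightarrow> ccomp C p (ccomp C q k) = ccomp C R k"
  by (metis assoc)
lemma inv_unique: assumes "f \<in> carr C" "g \<in> hom C (ccod C f) (cdom C f)" "ccomp C g f = cid C (cdom C f)"
   "g' \<in> hom C (ccod C f) (cdom C f)" "ccomp C f g' = cid C (ccod C f)" shows "g = g'"
proof -
  have h: "g \<in> carr C" "cdom C g = ccod C f" "ccod C g = cdom C f" "g' \<in> carr C" "cdom C g' = ccod C f" "ccod C g' = cdom C f"
    using assms by (auto simp: hom_def)
  have "g = ccomp C g (cid C (ccod C f))" using h by (metis id_right)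
  also have "\<dots> = ccomp C g (ccomp C f g')" using assms by simp
  also have "\<dots> = ccomp C (ccomp C g f) g'" using assms h by (metis assoc)
  also have "\<dots> = g'" using assms h by (metis id_left)
  finally show ?thesis .
qed
lemma inv_props: assumes "is_iso C f"
  shows "inv_arr C f \<in> carr C" "cdom C (inv_arr C f) = ccod C f" "ccod C (inv_arr C f) = cdom C f"
   "ccomp C (inv_arr C f) f = cid C (cdom C f)" "ccomp C f (inv_arr C f) = cid C (ccod C f)"
proof -
  have f: "f \<in> carr C" using assms by (simp add: is_iso_def)
  obtain g where g: "g\<in>hom C (ccod C f) (cdom C f)" "ccomp C g f = cid C (cdom C f) \<and> ccomp C f g = cid C (ccod C f)"
    using assms by (auto simp: is_iso_def)
  have "inv_arr C f = g" unfolding inv_arr_def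
    apply (rule the_equality) using g apply blast
    using inv_unique[OF f] g by blast
  thus "inv_arr C f \<in> carr C" "cdom C (inv_arr C f) = ccod C f" "ccod C (inv_arr C f) = cdom C f"
   "ccomp C (inv_arr C f) f = cid C (cdom C f)" "ccomp C f (inv_arr C f) = cid C (ccod C f)"
    using g by (auto simp: hom_def)
qed
lemma ctxr3: "ccomp C p (ccomp C q r) = R \<Longrightarrow> p \<in> carr C \<Longrightarrow> q \<in> carr C \<Longrightarrow> r \<in> carr C \<Longrightarrow> k \<in> carr C \<Longrightarrow>
   ccod C q = cdom C p \<Longrightarrow> ccod C r = cdom C q \<Longrightarrow> ccod C k = cdom C r \<Longrightarrow> ccomp C p (ccomp C q (ccomp C r k)) = ccomp C R k"
  by (metis assoc comp_arr cod_comp dom_comp)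
lemma cancel_iso: assumes "is_iso C f" "ccomp C X f = ccomp C Y f" "X \<in> carr C" "Y \<in> carr C"
  "cdom C X = ccod C f" "cdom C Y = ccod C f" shows "X = Y"
proof -
  have f: "f \<in> carr C" using assms(1) by (simp add: is_iso_def)
  note i = inv_props[OF assms(1)]
  have X: "X = ccomp C (ccomp C X f) (inv_arr C f)"
    using i assms f by (metis assoc id_right)
  have Y: "Y = ccomp C (ccomp C Y f) (inv_arr C f)"
    using i assms f by (metis assoc id_right)
  show ?thesis using X Y assms(2) by metis
qed
end

locale functor_l = fixes C :: "('o1,'a1) cat" and D :: "('o2,'a2) cat" and F assumes fn: "is_functor C D F"
begin
sublocale C: category C using fn by (simp add: is_functor_def category_def)
sublocale D: category D using fn by (simp add: is_functor_def category_def)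
lemma obj[simp]: "x \<in> cobj C \<Longrightarrow> fo F x \<in> cobj D" using fn by (simp add: is_functor_def)
lemma arr[simp]: "f \<in> carr C \<Longrightarrow> fa F f \<in> carr D" using fn by (simp add: is_functor_def hom_def)
lemma dom[simp]: "f \<in> carr C \<Longrightarrow> cdom D (fa F f) = fo F (cdom C f)" using fn by (simp add: is_functor_def hom_def)
lemma cod[simp]: "f \<in> carr C \<Longrightarrow> ccod D (fa F f) = fo F (ccod C f)" using fn by (simp add: is_functor_def hom_def)
lemma pid[simp]: "x \<in> cobj C \<Longrightarrow> fa F (cid C x) = cid D (fo F x)" using fn by (simp add: is_functor_def)
lemma pcomp[simp]: "f \<in> carr C \<Longrightarrow> g \<in> carr C \<Longrightarrow> ccod C f = cdom C g \<Longrightarrow> fa F (ccomp C g f) = ccomp D (fa F g) (fa F f)"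
  using fn by (simp add: is_functor_def)
end

locale nt_l = fixes C :: "('o1,'a1) cat" and D :: "('o2,'a2) cat" and F G \<alpha> assumes nt: "is_nt C D F G \<alpha>"
begin
sublocale F: functor_l C D F using nt by (simp add: is_nt_def functor_l_def)
sublocale G: functor_l C D G using nt by (simp add: is_nt_def functor_l_def)
lemma arr[simp]: "x \<in> cobj C \<Longrightarrow> \<alpha> x \<in> carr D" using nt by (simp add: is_nt_def hom_def)
lemma dom[simp]: "x \<in> cobj C \<Longrightarrow> cdom D (\<alpha> x) = fo F x" using nt by (simp add: is_nt_def hom_def)
lemma cod[simp]: "x \<in> cobj C \<Longrightarrow> ccod D (\<alpha> x) = fo G x" using nt by (simp add: is_nt_def hom_def)
lemma nat: "f \<in> carr C \<Longrightarrow> ccomp D (\<alpha> (ccod C f)) (fa F f) = ccomp D (fa G f) (\<alpha> (cdom C f))"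
  using nt by (simp add: is_nt_def)
end

lemma functor_comp: "is_functor C D F \<Longrightarrow> is_functor D E G \<Longrightarrow> is_functor C E (fcomp G F)"
  unfolding is_functor_def hom_def by auto



locale S =
  fixes A :: "('oa,'aa) cat" and B :: "('ob,'ab) cat" and T :: "('ot,'at) cat"
   and NA RA etaA epsA NB RB etaB epsB D Delta eps zeta
  assumes adjA: "is_adj A T NA RA etaA epsA" and adjB: "is_adj B T NB RB etaB epsB"
   and com: "is_comonad B D Delta eps"
   and zeta_nt: "is_nt T B (fcomp D RB) (fcomp RB (fcomp NA RA)) zeta"
   and zeta_eps: "\<And>y. y\<in>cobj T \<Longrightarrow> ccomp B (fa RB (epsA y)) (zeta y) = eps (fo RB y)"
   and zeta_delta: "\<And>y. y\<in>cobj T \<Longrightarrow> ccomp B (fa RB (fa NA (etaA (fo RA y)))) (zeta y) =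
          ccomp B (zeta (fo NA (fo RA y))) (ccomp B (fa D (zeta y)) (Delta (fo RB y)))"
begin
abbreviation cT (infixr "\<cdot>" 55) where "g \<cdot> f \<equiv> ccomp T g f"
abbreviation cA (infixr "\<cdot>\<^sub>A" 55) where "g \<cdot>\<^sub>A f \<equiv> ccomp A g f"
abbreviation cB (infixr "\<cdot>\<^sub>B" 55) where "g \<cdot>\<^sub>B f \<equiv> ccomp B g f"

sublocale T: category T using adjA by (simp add: is_adj_def is_functor_def category_def)
sublocale A: category A using adjA by (simp add: is_adj_def is_functor_def category_def)
sublocale B: category B using adjB by (simp add: is_adj_def is_functor_def category_def)
sublocale NA: functor_l A T NA using adjA by (simp add: is_adj_def functor_l_def)
sublocale RA: functor_l T A RA using adjA by (simp add: is_adj_def functor_l_def)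
sublocale NB: functor_l B T NB using adjB by (simp add: is_adj_def functor_l_def)
sublocale RB: functor_l T B RB using adjB by (simp add: is_adj_def functor_l_def)
sublocale D: functor_l B B D using com by (simp add: is_comonad_def functor_l_def)
sublocale etaA: nt_l A A fid "fcomp RA NA" etaA using adjA by (simp add: is_adj_def nt_l_def)
sublocale epsA: nt_l T T "fcomp NA RA" fid epsA using adjA by (simp add: is_adj_def nt_l_def)
sublocale etaB: nt_l B B fid "fcomp RB NB" etaB using adjB by (simp add: is_adj_def nt_l_def)
sublocale epsB: nt_l T T "fcomp NB RB" fid epsB using adjB by (simp add: is_adj_def nt_l_def)
sublocale Delta: nt_l B B D "fcomp D D" Delta using com by (simp add: is_comonad_def nt_l_def)
sublocale eps: nt_l B B D fid eps using com by (simp add: is_comonad_def nt_l_def)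
sublocale zeta: nt_l T B "fcomp D RB" "fcomp RB (fcomp NA RA)" zeta using zeta_nt by (simp add: nt_l_def)

lemma triA1: "x \<in> cobj A \<Longrightarrow> epsA (fo NA x) \<cdot> fa NA (etaA x) = cid T (fo NA x)"
  using adjA by (simp add: is_adj_def)
lemma triA2: "y \<in> cobj T \<Longrightarrow> fa RA (epsA y) \<cdot>\<^sub>A etaA (fo RA y) = cid A (fo RA y)"
  using adjA by (simp add: is_adj_def)
lemma triB1: "x \<in> cobj B \<Longrightarrow> epsB (fo NB x) \<cdot> fa NB (etaB x) = cid T (fo NB x)"
  using adjB by (simp add: is_adj_def)
lemma triB2: "y \<in> cobj T \<Longrightarrow> fa RB (epsB y) \<cdot>\<^sub>B etaB (fo RB y) = cid B (fo RB y)"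
  using adjB by (simp add: is_adj_def)
lemma com1: "x \<in> cobj B \<Longrightarrow> eps (fo D x) \<cdot>\<^sub>B Delta x = cid B (fo D x)"
  using com by (simp add: is_comonad_def)
lemma com2: "x \<in> cobj B \<Longrightarrow> fa D (eps x) \<cdot>\<^sub>B Delta x = cid B (fo D x)"
  using com by (simp add: is_comonad_def)
lemma com3: "x \<in> cobj B \<Longrightarrow> fa D (Delta x) \<cdot>\<^sub>B Delta x = Delta (fo D x) \<cdot>\<^sub>B Delta x"
  using com by (simp add: is_comonad_def)

definition psi where "psi b = epsB (fo NA (fo RA (fo NB b))) \<cdot> (fa NB (zeta (fo NB b)) \<cdot> fa NB (fa D (etaB b)))"

lemma psi_ty[simp]: assumes "b \<in> cobj B" shows "psi b \<in> carr T" "cdom T (psi b) = fo NB (fo D b)"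
   "ccod T (psi b) = fo NA (fo RA (fo NB b))"
  using assms by (simp_all add: psi_def)

lemma E: assumes b: "b \<in> cobj B" shows "epsA (fo NB b) \<cdot> psi b = fa NB (eps b)"
proof -
  have e1: "epsA (fo NB b) \<cdot> epsB (fo NA (fo RA (fo NB b))) = epsB (fo NB b) \<cdot> fa NB (fa RB (epsA (fo NB b)))"
    using epsB.nat[of "epsA (fo NB b)"] b by simp
  have e2: "fa NB (fa RB (epsA (fo NB b))) \<cdot> fa NB (zeta (fo NB b)) = fa NB (eps (fo RB (fo NB b)))"
    using arg_cong[OF zeta_eps[of "fo NB b"], of "fa NB"] b by simp
  have e3: "fa NB (eps (fo RB (fo NB b))) \<cdot> fa NB (fa D (etaB b)) = fa NB (etaB b) \<cdot> fa NB (eps b)"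
    using arg_cong[OF eps.nat[of "etaB b"], of "fa NB"] b by simp
  show ?thesis using b by (simp add: psi_def e1 T.ctxr[OF e1] e2 T.ctxr[OF e2] e3 T.ctxr[OF e3] triB1 T.ctxr[OF triB1])
qed

lemma zp: assumes b: "b \<in> cobj B"
  shows "fa RB (psi b) \<cdot>\<^sub>B etaB (fo D b) = zeta (fo NB b) \<cdot>\<^sub>B fa D (etaB b)"
proof -
  have h1: "fa RB (fa NB (fa D (etaB b))) \<cdot>\<^sub>B etaB (fo D b) = etaB (fo D (fo RB (fo NB b))) \<cdot>\<^sub>B fa D (etaB b)"
    using etaB.nat[of "fa D (etaB b)"] b by simp
  have h2: "fa RB (fa NB (zeta (fo NB b))) \<cdot>\<^sub>B etaB (fo D (fo RB (fo NB b))) = etaB (fo RB (fo NA (fo RA (fo NB b)))) \<cdot>\<^sub>B zeta (fo NB b)"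
    using etaB.nat[of "zeta (fo NB b)"] b by simp
  show ?thesis using b by (simp add: psi_def h1 B.ctxr[OF h1] h2 B.ctxr[OF h2] triB2 B.ctxr[OF triB2])
qed

lemma L: assumes b: "b \<in> cobj B"
  shows "fa NA (etaA (fo RA (fo NB b))) \<cdot> psi b = fa NA (fa RA (psi b)) \<cdot> (psi (fo D b) \<cdot> fa NB (Delta b))"
proof -
  have f1: "fa NA (etaA (fo RA (fo NB b))) \<cdot> epsB (fo NA (fo RA (fo NB b))) = epsB (fo NA (fo RA (fo NA (fo RA (fo NB b))))) \<cdot> fa NB (fa RB (fa NA (etaA (fo RA (fo NB b)))))"
    using epsB.nat[of "fa NA (etaA (fo RA (fo NB b)))"] b by simp
  have f2: "fa NB (fa RB (fa NA (etaA (fo RA (fo NB b))))) \<cdot> fa NB (zeta (fo NB b)) = fa NB (zeta (fo NA (fo RA (fo NB b)))) \<cdot> (fa NB (fa D (zeta (fo NB b))) \<cdot> fa NB (Delta (fo RB (fo NB b))))"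
    using arg_cong[OF zeta_delta[of "fo NB b"], of "fa NB"] b by simp
  have f3: "fa NB (Delta (fo RB (fo NB b))) \<cdot> fa NB (fa D (etaB b)) = fa NB (fa D (fa D (etaB b))) \<cdot> fa NB (Delta b)"
    using arg_cong[OF Delta.nat[of "etaB b"], of "fa NB"] b by simp
  have g1: "fa NA (fa RA (psi b)) \<cdot> epsB (fo NA (fo RA (fo NB (fo D b)))) = epsB (fo NA (fo RA (fo NA (fo RA (fo NB b))))) \<cdot> fa NB (fa RB (fa NA (fa RA (psi b))))"
    using epsB.nat[of "fa NA (fa RA (psi b))"] b by simp
  have g2: "fa NB (fa RB (fa NA (fa RA (psi b)))) \<cdot> fa NB (zeta (fo NB (fo D b))) = fa NB (zeta (fo NA (fo RA (fo NB b)))) \<cdot> fa NB (fa D (fa RB (psi b)))"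
    using arg_cong[OF zeta.nat[of "psi b"], of "fa NB"] b by simp
  have g3: "fa NB (fa D (fa RB (psi b))) \<cdot> fa NB (fa D (etaB (fo D b))) = fa NB (fa D (zeta (fo NB b))) \<cdot> fa NB (fa D (fa D (etaB b)))"
    using arg_cong[OF zp[OF b], of "\<lambda>h. fa NB (fa D h)"] b by simp
  have "fa NA (etaA (fo RA (fo NB b))) \<cdot> psi b = epsB (fo NA (fo RA (fo NA (fo RA (fo NB b))))) \<cdot> (fa NB (zeta (fo NA (fo RA (fo NB b)))) \<cdot>
          (fa NB (fa D (zeta (fo NB b))) \<cdot> (fa NB (fa D (fa D (etaB b))) \<cdot> fa NB (Delta b))))"
    using b unfolding psi_def
    by (simp add: f1 T.ctxr[OF f1] f2 T.ctxr[OF f2] f3 T.ctxr[OF f3])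
  also have "\<dots> = fa NA (fa RA (psi b)) \<cdot> (psi (fo D b) \<cdot> fa NB (Delta b))"
    using b unfolding psi_def[of "fo D b"]
    by (simp add: g1 T.ctxr[OF g1] g2 T.ctxr[OF g2] g3 T.ctxr[OF g3])
  finally show ?thesis .
qed

lemma psi_nat: assumes f: "f \<in> carr B"
  shows "psi (ccod B f) \<cdot> fa NB (fa D f) = fa NA (fa RA (fa NB f)) \<cdot> psi (cdom B f)"
proof -
  have n1: "fa NB (fa D (etaB (ccod B f))) \<cdot> fa NB (fa D f) = fa NB (fa D (fa RB (fa NB f))) \<cdot> fa NB (fa D (etaB (cdom B f)))"
    using arg_cong[OF etaB.nat[of f], of "\<lambda>h. fa NB (fa D h)"] f by simp
  have n2: "fa NB (zeta (fo NB (ccod B f))) \<cdot> fa NB (fa D (fa RB (fa NB f))) = fa NB (fa RB (fa NA (fa RA (fa NB f)))) \<cdot> fa NB (zeta (fo NB (cdom B f)))"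
    using arg_cong[OF zeta.nat[of "fa NB f"], of "fa NB"] f by simp
  have n3: "epsB (fo NA (fo RA (fo NB (ccod B f)))) \<cdot> fa NB (fa RB (fa NA (fa RA (fa NB f)))) = fa NA (fa RA (fa NB f)) \<cdot> epsB (fo NA (fo RA (fo NB (cdom B f))))"
    using epsB.nat[of "fa NA (fa RA (fa NB f))"] f by simp
  show ?thesis using f unfolding psi_def by (simp add: n1 T.ctxr[OF n1] n2 T.ctxr[OF n2] n3 T.ctxr[OF n3])
qed

end

locale S2 = S +
  assumes iso: "\<And>b. b \<in> cobj B \<Longrightarrow> is_iso T (psi b)"
begin

definition psii where "psii b = inv_arr T (psi b)"

lemma psii_ty[simp]: assumes "b \<in> cobj B" shows "psii b \<in> carr T" "cdom T (psii b) = fo NA (fo RA (fo NB b))"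
   "ccod T (psii b) = fo NB (fo D b)"
  using T.inv_props[OF iso[OF assms]] assms by (simp_all add: psii_def)
lemma psii_l: "b \<in> cobj B \<Longrightarrow> psii b \<cdot> psi b = cid T (fo NB (fo D b))"
  using T.inv_props[OF iso] by (simp add: psii_def)
lemma psii_r: "b \<in> cobj B \<Longrightarrow> psi b \<cdot> psii b = cid T (fo NA (fo RA (fo NB b)))"
  using T.inv_props[OF iso] by (simp add: psii_def)

lemma psii_nat: assumes f: "f \<in> carr B"
  shows "psii (ccod B f) \<cdot> fa NA (fa RA (fa NB f)) = fa NB (fa D f) \<cdot> psii (cdom B f)"
proof -
  have "psii (ccod B f) \<cdot> fa NA (fa RA (fa NB f)) = psii (ccod B f) \<cdot> (fa NA (fa RA (fa NB f)) \<cdot> (psi (cdom B f) \<cdot> psii (cdom B f)))"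
    using f by (simp add: psii_r)
  also have "\<dots> = psii (ccod B f) \<cdot> (psi (ccod B f) \<cdot> (fa NB (fa D f) \<cdot> psii (cdom B f)))"
    using f by (simp add: T.ctxr[OF psi_nat[OF f, symmetric]])
  also have "\<dots> = fa NB (fa D f) \<cdot> psii (cdom B f)"
    using f T.ctxr[OF psii_l] by simp
  finally show ?thesis .
qed

definition tau where "tau b = fa RA (fa NB (fa RB (psi b))) \<cdot>\<^sub>A (fa RA (fa NB (etaB (fo D b))) \<cdot>\<^sub>A
   (fa RA (psii b) \<cdot>\<^sub>A etaA (fo RA (fo NB b))))"

lemma tau_ty[simp]: assumes "b \<in> cobj B" shows "tau b \<in> carr A" "cdom A (tau b) = fo RA (fo NB b)"
  "ccod A (tau b) = fo RA (fo NB (fo RB (fo NA (fo RA (fo NB b)))))"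
  using assms by (simp_all add: tau_def)

lemma ax1: assumes b: "b \<in> cobj B"
  shows "fa RA (fa NB (fa RB (epsA (fo NB b)))) \<cdot>\<^sub>A tau b = fa RA (fa NB (etaB b))"
proof -
  have a1: "fa RA (fa NB (fa RB (epsA (fo NB b)))) \<cdot>\<^sub>A fa RA (fa NB (fa RB (psi b))) = fa RA (fa NB (fa RB (fa NB (eps b))))"
    using arg_cong[OF E[OF b], of "\<lambda>h. fa RA (fa NB (fa RB h))"] b by simp
  have a2: "fa RA (fa NB (fa RB (fa NB (eps b)))) \<cdot>\<^sub>A fa RA (fa NB (etaB (fo D b))) = fa RA (fa NB (etaB b)) \<cdot>\<^sub>A fa RA (fa NB (eps b))"
    using arg_cong[OF etaB.nat[of "eps b"], of "\<lambda>h. fa RA (fa NB h)"] b by simp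
  have a3': "fa NB (eps b) \<cdot> psii b = epsA (fo NB b)"
  proof -
    have "fa NB (eps b) \<cdot> psii b = epsA (fo NB b) \<cdot> (psi b \<cdot> psii b)" using b by (simp add: T.ctxr[OF E[OF b]])
    also have "\<dots> = epsA (fo NB b)" using b by (simp add: psii_r)
    finally show ?thesis .
  qed
  have a3: "fa RA (fa NB (eps b)) \<cdot>\<^sub>A fa RA (psii b) = fa RA (epsA (fo NB b))"
    using arg_cong[OF a3', of "fa RA"] b by simp
  show ?thesis using b unfolding tau_def
    by (simp add: a1 A.ctxr[OF a1] a2 A.ctxr[OF a2] a3 A.ctxr[OF a3] triA2 A.ctxr[OF triA2])
qed

lemma ax2: assumes b: "b \<in> cobj B"
  shows "fa RA (epsB (fo NA (fo RA (fo NB b)))) \<cdot>\<^sub>A tau b = etaA (fo RA (fo NB b))"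
proof -
  have a1: "fa RA (epsB (fo NA (fo RA (fo NB b)))) \<cdot>\<^sub>A fa RA (fa NB (fa RB (psi b))) = fa RA (psi b) \<cdot>\<^sub>A fa RA (epsB (fo NB (fo D b)))"
    using arg_cong[OF epsB.nat[of "psi b"], of "fa RA"] b by simp
  have a2: "fa RA (epsB (fo NB (fo D b))) \<cdot>\<^sub>A fa RA (fa NB (etaB (fo D b))) = cid A (fo RA (fo NB (fo D b)))"
    using arg_cong[OF triB1[of "fo D b"], of "fa RA"] b by simp
  have a3: "fa RA (psi b) \<cdot>\<^sub>A fa RA (psii b) = cid A (fo RA (fo NA (fo RA (fo NB b))))"
    using arg_cong[OF psii_r[OF b], of "fa RA"] b by simp
  show ?thesis using b unfolding tau_def
    by (simp add: a1 A.ctxr[OF a1] a2 A.ctxr[OF a2] a3 A.ctxr[OF a3])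
qed

lemma tau_nat: assumes f: "f \<in> carr B"
  shows "tau (ccod B f) \<cdot>\<^sub>A fa RA (fa NB f) = fa RA (fa NB (fa RB (fa NA (fa RA (fa NB f))))) \<cdot>\<^sub>A tau (cdom B f)"
proof -
  have m1: "etaA (fo RA (fo NB (ccod B f))) \<cdot>\<^sub>A fa RA (fa NB f) = fa RA (fa NA (fa RA (fa NB f))) \<cdot>\<^sub>A etaA (fo RA (fo NB (cdom B f)))"
    using etaA.nat[of "fa RA (fa NB f)"] f by simp
  have m2: "fa RA (psii (ccod B f)) \<cdot>\<^sub>A fa RA (fa NA (fa RA (fa NB f))) = fa RA (fa NB (fa D f)) \<cdot>\<^sub>A fa RA (psii (cdom B f))"
    using arg_cong[OF psii_nat[OF f], of "fa RA"] f by simp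
  have m3: "fa RA (fa NB (etaB (fo D (ccod B f)))) \<cdot>\<^sub>A fa RA (fa NB (fa D f)) = fa RA (fa NB (fa RB (fa NB (fa D f)))) \<cdot>\<^sub>A fa RA (fa NB (etaB (fo D (cdom B f))))"
    using arg_cong[OF etaB.nat[of "fa D f"], of "\<lambda>h. fa RA (fa NB h)"] f by simp
  have m4: "fa RA (fa NB (fa RB (psi (ccod B f)))) \<cdot>\<^sub>A fa RA (fa NB (fa RB (fa NB (fa D f)))) = fa RA (fa NB (fa RB (fa NA (fa RA (fa NB f))))) \<cdot>\<^sub>A fa RA (fa NB (fa RB (psi (cdom B f))))"
    using arg_cong[OF psi_nat[OF f], of "\<lambda>h. fa RA (fa NB (fa RB h))"] f by simp
  show ?thesis using f unfolding tau_def
    by (simp add: m1 A.ctxr[OF m1] m2 A.ctxr[OF m2] m3 A.ctxr[OF m3] m4 A.ctxr[OF m4])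
qed

definition phi where "phi b = fa NB (fa RB (psi b)) \<cdot> (fa NB (etaB (fo D b)) \<cdot> psii b)"

lemma phi_ty[simp]: assumes "b \<in> cobj B" shows "phi b \<in> carr T" "cdom T (phi b) = fo NA (fo RA (fo NB b))"
  "ccod T (phi b) = fo NB (fo RB (fo NA (fo RA (fo NB b))))"
  using assms by (simp_all add: phi_def)

lemma coassocT: assumes b: "b \<in> cobj B"
  shows "fa NB (fa RB (fa NA (fa RA (phi b)))) \<cdot> (fa NB (fa RB (fa NA (etaA (fo RA (fo NB b))))) \<cdot> phi b)
    = phi (fo RB (fo NA (fo RA (fo NB b)))) \<cdot> (fa NA (fa RA (phi b)) \<cdot> fa NA (etaA (fo RA (fo NB b))))"
    (is "?X = ?Y")
proof -
  let ?M = "fa NB (fa RB (psi (fo RB (fo NA (fo RA (fo NB b)))))) \<cdot> (fa NB (fa RB (fa NB (fa D (fa RB (psi b))))) \<cdot> (fa NB (fa RB (fa NB (fa D (etaB (fo D b)))))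
      \<cdot> (fa NB (fa RB (fa NB (Delta b))) \<cdot> fa NB (etaB (fo D b)))))"
  have x2: "fa NB (fa RB (fa NA (etaA (fo RA (fo NB b))))) \<cdot> fa NB (fa RB (psi b)) = fa NB (fa RB (fa NA (fa RA (psi b)))) \<cdot> (fa NB (fa RB (psi (fo D b))) \<cdot> fa NB (fa RB (fa NB (Delta b))))"
    using arg_cong[OF L[OF b], of "\<lambda>h. fa NB (fa RB h)"] b by simp
  have x3: "fa NB (fa RB (fa NA (fa RA (psii b)))) \<cdot> fa NB (fa RB (fa NA (fa RA (psi b)))) = cid T (fo NB (fo RB (fo NA (fo RA (fo NB (fo D b))))))"
    using arg_cong[OF psii_l[OF b], of "\<lambda>h. fa NB (fa RB (fa NA (fa RA h)))"] b by simp
  have x4: "fa NB (fa RB (fa NA (fa RA (fa NB (etaB (fo D b)))))) \<cdot> fa NB (fa RB (psi (fo D b))) = fa NB (fa RB (psi (fo RB (fo NB (fo D b))))) \<cdot> fa NB (fa RB (fa NB (fa D (etaB (fo D b)))))"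
    using arg_cong[OF psi_nat[of "etaB (fo D b)"], of "\<lambda>h. fa NB (fa RB h)"] b by simp
  have x5: "fa NB (fa RB (fa NA (fa RA (fa NB (fa RB (psi b)))))) \<cdot> fa NB (fa RB (psi (fo RB (fo NB (fo D b))))) = fa NB (fa RB (psi (fo RB (fo NA (fo RA (fo NB b)))))) \<cdot> fa NB (fa RB (fa NB (fa D (fa RB (psi b)))))"
    using arg_cong[OF psi_nat[of "fa RB (psi b)"], of "\<lambda>h. fa NB (fa RB h)"] b by simp
  have X: "?X \<cdot> psi b = ?M" using b unfolding phi_def
    by (simp add: psii_l x2 T.ctxr[OF x2] x3 T.ctxr[OF x3] x4 T.ctxr[OF x4] x5 T.ctxr[OF x5])
  have y2: "fa NA (fa RA (psii b)) \<cdot> fa NA (fa RA (psi b)) = cid T (fo NA (fo RA (fo NB (fo D b))))"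
    using arg_cong[OF psii_l[OF b], of "\<lambda>h. fa NA (fa RA h)"] b by simp
  have y3: "fa NA (fa RA (fa NB (etaB (fo D b)))) \<cdot> psi (fo D b) = psi (fo RB (fo NB (fo D b))) \<cdot> fa NB (fa D (etaB (fo D b)))"
    using psi_nat[of "etaB (fo D b)"] b by simp
  have y4: "fa NA (fa RA (fa NB (fa RB (psi b)))) \<cdot> psi (fo RB (fo NB (fo D b))) = psi (fo RB (fo NA (fo RA (fo NB b)))) \<cdot> fa NB (fa D (fa RB (psi b)))"
    using psi_nat[of "fa RB (psi b)"] b by simp
  have y6: "fa NB (etaB (fo D (fo RB (fo NA (fo RA (fo NB b)))))) \<cdot> fa NB (fa D (fa RB (psi b))) = fa NB (fa RB (fa NB (fa D (fa RB (psi b))))) \<cdot> fa NB (etaB (fo D (fo RB (fo NB (fo D b)))))"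
    using arg_cong[OF etaB.nat[of "fa D (fa RB (psi b))"], of "fa NB"] b by simp
  have y7: "fa NB (etaB (fo D (fo RB (fo NB (fo D b))))) \<cdot> fa NB (fa D (etaB (fo D b))) = fa NB (fa RB (fa NB (fa D (etaB (fo D b))))) \<cdot> fa NB (etaB (fo D (fo D b)))"
    using arg_cong[OF etaB.nat[of "fa D (etaB (fo D b))"], of "fa NB"] b by simp
  have y8: "fa NB (etaB (fo D (fo D b))) \<cdot> fa NB (Delta b) = fa NB (fa RB (fa NB (Delta b))) \<cdot> fa NB (etaB (fo D b))"
    using arg_cong[OF etaB.nat[of "Delta b"], of "fa NB"] b by simp
  have Y: "?Y \<cdot> psi b = ?M" using b unfolding phi_def
    by (simp add: L[OF b] y2 T.ctxr[OF y2] y3 T.ctxr[OF y3] y4 T.ctxr[OF y4] psii_l T.ctxr[OF psii_l[of "fo RB (fo NA (fo RA (fo NB b)))"]]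
       y6 T.ctxr[OF y6] y7 T.ctxr[OF y7] y8 T.ctxr[OF y8])
  show ?thesis
    apply (rule T.cancel_iso[OF iso[OF b]])
    using X Y b by simp_all
qed

lemma ax3: assumes b: "b \<in> cobj B"
  shows "fa RA (fa NB (fa RB (fa NA (tau b)))) \<cdot>\<^sub>A tau b = tau (fo RB (fo NA (fo RA (fo NB b)))) \<cdot>\<^sub>A tau b"
proof -
  have z1: "etaA (fo RA (fo NB (fo RB (fo NA (fo RA (fo NB b)))))) \<cdot>\<^sub>A fa RA (fa NB (fa RB (psi b))) = fa RA (fa NA (fa RA (fa NB (fa RB (psi b))))) \<cdot>\<^sub>A etaA (fo RA (fo NB (fo RB (fo NB (fo D b)))))"
    using etaA.nat[of "fa RA (fa NB (fa RB (psi b)))"] b by simp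
  have z2: "etaA (fo RA (fo NB (fo RB (fo NB (fo D b))))) \<cdot>\<^sub>A fa RA (fa NB (etaB (fo D b))) = fa RA (fa NA (fa RA (fa NB (etaB (fo D b))))) \<cdot>\<^sub>A etaA (fo RA (fo NB (fo D b)))"
    using etaA.nat[of "fa RA (fa NB (etaB (fo D b)))"] b by simp
  have z3: "etaA (fo RA (fo NB (fo D b))) \<cdot>\<^sub>A fa RA (psii b) = fa RA (fa NA (fa RA (psii b))) \<cdot>\<^sub>A etaA (fo RA (fo NA (fo RA (fo NB b))))"
    using etaA.nat[of "fa RA (psii b)"] b by simp
  have z4: "etaA (fo RA (fo NA (fo RA (fo NB b)))) \<cdot>\<^sub>A etaA (fo RA (fo NB b)) = fa RA (fa NA (etaA (fo RA (fo NB b)))) \<cdot>\<^sub>A etaA (fo RA (fo NB b))"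
    using etaA.nat[of "etaA (fo RA (fo NB b))"] b by simp
  have l: "fa RA (fa NB (fa RB (fa NA (tau b)))) \<cdot>\<^sub>A tau b = fa RA (fa NB (fa RB (fa NA (fa RA (phi b)))) \<cdot> (fa NB (fa RB (fa NA (etaA (fo RA (fo NB b))))) \<cdot> phi b)) \<cdot>\<^sub>A etaA (fo RA (fo NB b))"
    using b by (simp add: tau_def phi_def)
  have r: "tau (fo RB (fo NA (fo RA (fo NB b)))) \<cdot>\<^sub>A tau b = fa RA (phi (fo RB (fo NA (fo RA (fo NB b)))) \<cdot> (fa NA (fa RA (phi b)) \<cdot> fa NA (etaA (fo RA (fo NB b))))) \<cdot>\<^sub>A etaA (fo RA (fo NB b))"
    using b by (simp add: tau_def phi_def z1 A.ctxr[OF z1] z2 A.ctxr[OF z2] z3 A.ctxr[OF z3] z4 A.ctxr[OF z4])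
  show ?thesis using l r coassocT[OF b] by simp
qed

end


locale Mor = X: S2 A B T NA RA etaA epsA NB RB etaB epsB D Delta eps zeta
  + Y: S2 A B T' NA' RA' etaA' epsA' NB' RB' etaB' epsB' D' Delta' eps' zeta'
  for A :: "('oa,'aa) cat" and B :: "('ob,'ab) cat" and T :: "('ot,'at) cat"
   and NA RA etaA epsA NB RB etaB epsB D Delta eps zeta
   and T' :: "('ot2,'at2) cat" and NA' RA' etaA' epsA' NB' RB' etaB' epsB' D' Delta' eps' zeta' +
  fixes F :: "('ot2,'at2,'ot,'at) ftor" and t
  assumes Ffun: "is_functor T' T F"
   and cRAo[simp]: "\<And>y. y \<in> cobj T' \<Longrightarrow> fo RA (fo F y) = fo RA' y"
   and cRBo[simp]: "\<And>y. y \<in> cobj T' \<Longrightarrow> fo RB (fo F y) = fo RB' y"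
   and cRAa[simp]: "\<And>f. f \<in> carr T' \<Longrightarrow> fa RA (fa F f) = fa RA' f"
   and cRBa[simp]: "\<And>f. f \<in> carr T' \<Longrightarrow> fa RB (fa F f) = fa RB' f"
   and tmor: "is_comonad_mor B D Delta eps D' Delta' eps' t"
   and zc0: "\<And>y. y\<in>cobj T' \<Longrightarrow> ccomp B (fa RB (ccomp T (epsA (fo F (fo NA' (fo RA' y)))) (fa NA (etaA' (fo RA' y))))) (zeta (fo F y))
        = ccomp B (zeta' y) (t (fo RB' y))"
begin

sublocale Fn: functor_l T' T F using Ffun by (simp add: functor_l_def)
sublocale tn: nt_l B B D D' t using tmor by (simp add: is_comonad_mor_def nt_l_def)

definition a where "a x = ccomp T (epsA (fo F (fo NA' x))) (fa NA (etaA' x))"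
definition b where "b x = ccomp T (epsB (fo F (fo NB' x))) (fa NB (etaB' x))"

lemma a_ty[simp]: assumes "x \<in> cobj A" shows "a x \<in> carr T" "cdom T (a x) = fo NA x" "ccod T (a x) = fo F (fo NA' x)"
  using assms by (simp_all add: a_def)
lemma b_ty[simp]: assumes "x \<in> cobj B" shows "b x \<in> carr T" "cdom T (b x) = fo NB x" "ccod T (b x) = fo F (fo NB' x)"
  using assms by (simp_all add: b_def)

lemma zc: "y\<in>cobj T' \<Longrightarrow> ccomp B (fa RB (a (fo RA' y))) (zeta (fo F y)) = ccomp B (zeta' y) (t (fo RB' y))"
  using zc0 by (simp add: a_def)

lemma P1: assumes x: "x \<in> cobj B" shows "ccomp B (fa RB (b x)) (etaB x) = etaB' x"
proof -
  have h1: "ccomp B (fa RB (fa NB (etaB' x))) (etaB x) = ccomp B (etaB (fo RB' (fo NB' x))) (etaB' x)"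
    using X.etaB.nat[of "etaB' x"] x by simp
  have h2: "ccomp B (fa RB (epsB (fo F (fo NB' x)))) (etaB (fo RB' (fo NB' x))) = cid B (fo RB' (fo NB' x))"
    using X.triB2[of "fo F (fo NB' x)"] x by simp
  show ?thesis using x by (simp add: b_def h1 X.B.ctxr[OF h1] h2 X.B.ctxr[OF h2])
qed

lemma P2: assumes x: "x \<in> cobj A" shows "ccomp A (fa RA (a x)) (etaA x) = etaA' x"
proof -
  have h1: "ccomp A (fa RA (fa NA (etaA' x))) (etaA x) = ccomp A (etaA (fo RA' (fo NA' x))) (etaA' x)"
    using X.etaA.nat[of "etaA' x"] x by simp
  have h2: "ccomp A (fa RA (epsA (fo F (fo NA' x)))) (etaA (fo RA' (fo NA' x))) = cid A (fo RA' (fo NA' x))"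
    using X.triA2[of "fo F (fo NA' x)"] x by simp
  show ?thesis using x by (simp add: a_def h1 X.A.ctxr[OF h1] h2 X.A.ctxr[OF h2])
qed

lemma P3: assumes g: "g \<in> carr B" shows "ccomp T (fa F (fa NB' g)) (b (cdom B g)) = ccomp T (b (ccod B g)) (fa NB g)"
proof -
  have h1: "ccomp T (fa F (fa NB' g)) (epsB (fo F (fo NB' (cdom B g)))) = ccomp T (epsB (fo F (fo NB' (ccod B g)))) (fa NB (fa RB' (fa NB' g)))"
    using X.epsB.nat[of "fa F (fa NB' g)"] g by simp
  have h2: "ccomp T (fa NB (fa RB' (fa NB' g))) (fa NB (etaB' (cdom B g))) = ccomp T (fa NB (etaB' (ccod B g))) (fa NB g)"
    using arg_cong[OF Y.etaB.nat[of g], of "fa NB"] g by simp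
  show ?thesis using g by (simp add: b_def h1 X.T.ctxr[OF h1] h2 X.T.ctxr[OF h2])
qed

lemma P4: assumes g: "g \<in> carr A" shows "ccomp T (fa F (fa NA' g)) (a (cdom A g)) = ccomp T (a (ccod A g)) (fa NA g)"
proof -
  have h1: "ccomp T (fa F (fa NA' g)) (epsA (fo F (fo NA' (cdom A g)))) = ccomp T (epsA (fo F (fo NA' (ccod A g)))) (fa NA (fa RA' (fa NA' g)))"
    using X.epsA.nat[of "fa F (fa NA' g)"] g by simp
  have h2: "ccomp T (fa NA (fa RA' (fa NA' g))) (fa NA (etaA' (cdom A g))) = ccomp T (fa NA (etaA' (ccod A g))) (fa NA g)"
    using arg_cong[OF Y.etaA.nat[of g], of "fa NA"] g by simp
  show ?thesis using g by (simp add: a_def h1 X.T.ctxr[OF h1] h2 X.T.ctxr[OF h2])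
qed

lemma P5: assumes z: "z \<in> cobj T'" shows "ccomp T (fa F (epsB' z)) (b (fo RB' z)) = epsB (fo F z)"
proof -
  have h1: "ccomp T (fa F (epsB' z)) (epsB (fo F (fo NB' (fo RB' z)))) = ccomp T (epsB (fo F z)) (fa NB (fa RB' (epsB' z)))"
    using X.epsB.nat[of "fa F (epsB' z)"] z by simp
  have h2: "ccomp T (fa NB (fa RB' (epsB' z))) (fa NB (etaB' (fo RB' z))) = cid T (fo NB (fo RB' z))"
    using arg_cong[OF Y.triB2[OF z], of "fa NB"] z by simp
  show ?thesis using z by (simp add: b_def h1 X.T.ctxr[OF h1] h2 X.T.ctxr[OF h2])
qed

lemma ZW: assumes x: "x \<in> cobj B"
  shows "ccomp T (b (fo RB' (fo NA' (fo RA' (fo NB' x))))) (ccomp T (fa NB (fa RB (a (fo RA' (fo NB' x)))))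
           (ccomp T (fa NB (fa RB (fa NA (fa RA (b x))))) (X.phi x)))
       = ccomp T (fa F (Y.phi x)) (ccomp T (fa F (fa NA' (fa RA (b x)))) (a (fo RA (fo NB x))))" (is "?Z = ?W")
proof -
  let ?M = "ccomp T (fa F (fa NB' (zeta' (fo NB' x)))) (ccomp T (fa F (fa NB' (fa D' (etaB' x)))) (ccomp T (fa F (fa NB' (t x))) (b (fo D x))))"
  have q1: "ccomp T (fa NB (fa RB (X.psi x))) (fa NB (etaB (fo D x))) = ccomp T (fa NB (zeta (fo NB x))) (fa NB (fa D (etaB x)))"
    using arg_cong[OF X.zp[OF x], of "fa NB"] x by simp
  have q2: "ccomp T (fa NB (fa RB (fa NA (fa RA (b x))))) (fa NB (zeta (fo NB x))) = ccomp T (fa NB (zeta (fo F (fo NB' x)))) (fa NB (fa D (fa RB (b x))))"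
    using arg_cong[OF X.zeta.nat[of "b x"], of "fa NB"] x by simp
  have q3: "ccomp T (fa NB (fa D (fa RB (b x)))) (fa NB (fa D (etaB x))) = fa NB (fa D (etaB' x))"
    using arg_cong[OF P1[OF x], of "\<lambda>h. fa NB (fa D h)"] x by simp
  have q4: "ccomp T (fa NB (fa RB (a (fo RA' (fo NB' x))))) (fa NB (zeta (fo F (fo NB' x)))) = ccomp T (fa NB (zeta' (fo NB' x))) (fa NB (t (fo RB' (fo NB' x))))"
    using arg_cong[OF zc[of "fo NB' x"], of "fa NB"] x by simp
  have q5: "ccomp T (fa NB (t (fo RB' (fo NB' x)))) (fa NB (fa D (etaB' x))) = ccomp T (fa NB (fa D' (etaB' x))) (fa NB (t x))"
    using arg_cong[OF tn.nat[of "etaB' x"], of "fa NB"] x by simp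
  have q6: "ccomp T (b (fo RB' (fo NA' (fo RA' (fo NB' x))))) (fa NB (zeta' (fo NB' x))) = ccomp T (fa F (fa NB' (zeta' (fo NB' x)))) (b (fo D' (fo RB' (fo NB' x))))"
    using P3[of "zeta' (fo NB' x)"] x by simp
  have q7: "ccomp T (b (fo D' (fo RB' (fo NB' x)))) (fa NB (fa D' (etaB' x))) = ccomp T (fa F (fa NB' (fa D' (etaB' x)))) (b (fo D' x))"
    using P3[of "fa D' (etaB' x)"] x by simp
  have q8: "ccomp T (b (fo D' x)) (fa NB (t x)) = ccomp T (fa F (fa NB' (t x))) (b (fo D x))"
    using P3[of "t x"] x by simp
  have Z: "ccomp T ?Z (X.psi x) = ?M" using x unfolding X.phi_def
    by (simp add: X.psii_l q1 X.T.ctxr[OF q1] q2 X.T.ctxr[OF q2] q3 X.T.ctxr[OF q3] q4 X.T.ctxr[OF q4]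
       q5 X.T.ctxr[OF q5] q6 X.T.ctxr[OF q6] q7 X.T.ctxr[OF q7] q8 X.T.ctxr[OF q8])
  have r1: "ccomp T (fa F (fa NA' (fa RA (b x)))) (a (fo RA (fo NB x))) = ccomp T (a (fo RA' (fo NB' x))) (fa NA (fa RA (b x)))"
    using P4[of "fa RA (b x)"] x by simp
  have r2: "ccomp T (fa NA (fa RA (b x))) (epsB (fo NA (fo RA (fo NB x)))) = ccomp T (epsB (fo NA (fo RA' (fo NB' x)))) (fa NB (fa RB (fa NA (fa RA (b x)))))"
    using X.epsB.nat[of "fa NA (fa RA (b x))"] x by simp
  have r5: "ccomp T (a (fo RA' (fo NB' x))) (epsB (fo NA (fo RA' (fo NB' x)))) = ccomp T (epsB (fo F (fo NA' (fo RA' (fo NB' x))))) (fa NB (fa RB (a (fo RA' (fo NB' x)))))"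
    using X.epsB.nat[of "a (fo RA' (fo NB' x))"] x by simp
  have r8: "epsB (fo F (fo NA' (fo RA' (fo NB' x)))) = ccomp T (fa F (epsB' (fo NA' (fo RA' (fo NB' x))))) (b (fo RB' (fo NA' (fo RA' (fo NB' x)))))"
    using P5[of "fo NA' (fo RA' (fo NB' x))"] x by simp
  have r9: "ccomp T (fa F (epsB' (fo NA' (fo RA' (fo NB' x))))) (ccomp T (fa F (fa NB' (zeta' (fo NB' x)))) (fa F (fa NB' (fa D' (etaB' x))))) = fa F (Y.psi x)"
    using x by (simp add: Y.psi_def)
  have r10: "ccomp T (fa F (Y.psii x)) (fa F (Y.psi x)) = cid T (fo F (fo NB' (fo D' x)))"
    using arg_cong[OF Y.psii_l[OF x], of "fa F"] x by simp
  have r11: "ccomp T (fa F (fa NB' (fa RB' (Y.psi x)))) (fa F (fa NB' (etaB' (fo D' x)))) = ccomp T (fa F (fa NB' (zeta' (fo NB' x)))) (fa F (fa NB' (fa D' (etaB' x))))"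
    using arg_cong[OF Y.zp[OF x], of "\<lambda>h. fa F (fa NB' h)"] x by simp
  have W: "ccomp T ?W (X.psi x) = ?M" using x unfolding Y.phi_def X.psi_def[of x]
    by (simp add: r1 X.T.ctxr[OF r1] r2 X.T.ctxr[OF r2] q2 X.T.ctxr[OF q2] q3 X.T.ctxr[OF q3] r5 X.T.ctxr[OF r5]
       q4 X.T.ctxr[OF q4] q5 X.T.ctxr[OF q5] r8 q6 X.T.ctxr[OF q6] q7 X.T.ctxr[OF q7] q8 X.T.ctxr[OF q8]
       X.T.ctxr3[OF r9] r10 X.T.ctxr[OF r10] r11 X.T.ctxr[OF r11])
  show ?thesis
    apply (rule X.T.cancel_iso[OF X.iso[OF x]])
    using Z W x by simp_all
qed

lemma morph: assumes x: "x \<in> cobj B"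
  shows "ccomp A (ccomp A (fa RA (b (fo RB' (fo NA' (fo RA' (fo NB' x))))))
            (ccomp A (fa RA (fa NB (fa RB (a (fo RA' (fo NB' x)))))) (fa RA (fa NB (fa RB (fa NA (fa RA (b x))))))))
          (X.tau x)
        = ccomp A (Y.tau x) (fa RA (b x))"
proof -
  have l: "ccomp A (ccomp A (fa RA (b (fo RB' (fo NA' (fo RA' (fo NB' x))))))
            (ccomp A (fa RA (fa NB (fa RB (a (fo RA' (fo NB' x)))))) (fa RA (fa NB (fa RB (fa NA (fa RA (b x))))))))
          (X.tau x) = ccomp A (fa RA (ccomp T (b (fo RB' (fo NA' (fo RA' (fo NB' x))))) (ccomp T (fa NB (fa RB (a (fo RA' (fo NB' x)))))
           (ccomp T (fa NB (fa RB (fa NA (fa RA (b x))))) (X.phi x))))) (etaA (fo RA (fo NB x)))"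
    using x by (simp add: X.tau_def X.phi_def)
  have s1: "ccomp A (etaA' (fo RA' (fo NB' x))) (fa RA (b x)) = ccomp A (fa RA' (fa NA' (fa RA (b x)))) (etaA' (fo RA (fo NB x)))"
    using Y.etaA.nat[of "fa RA (b x)"] x by simp
  have s2: "etaA' (fo RA (fo NB x)) = ccomp A (fa RA (a (fo RA (fo NB x)))) (etaA (fo RA (fo NB x)))"
    using P2[of "fo RA (fo NB x)"] x by simp
  have r: "ccomp A (Y.tau x) (fa RA (b x)) = ccomp A (fa RA (ccomp T (fa F (Y.phi x)) (ccomp T (fa F (fa NA' (fa RA (b x)))) (a (fo RA (fo NB x))))))
      (etaA (fo RA (fo NB x)))"
    using x by (simp add: Y.tau_def Y.phi_def s1 X.A.ctxr[OF s1] s2)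
  show ?thesis using l r ZW[OF x] by simp
qed

end


lemma obj_S: assumes "rarr_obj A B X"
  shows "S A B (rT X) (rNA X) (rRA X) (rEtaA X) (rEpsA X) (rNB X) (rRB X) (rEtaB X) (rEpsB X) (rD X) (rDelta X) (rEps X) (rZeta X)"
  using assms unfolding rarr_obj_def comonad_arrow_def Let_def S_def by auto

lemma obj_S2: assumes o: "rarr_obj A B X"
  shows "S2 A B (rT X) (rNA X) (rRA X) (rEtaA X) (rEpsA X) (rNB X) (rRB X) (rEtaB X) (rEpsB X) (rD X) (rDelta X) (rEps X) (rZeta X)"
proof -
  interpret I: S A B "rT X" "rNA X" "rRA X" "rEtaA X" "rEpsA X" "rNB X" "rRB X" "rEtaB X" "rEpsB X" "rD X" "rDelta X" "rEps X" "rZeta X"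
    by (rule obj_S[OF o])
  have zb: "\<And>b. zbar X b = I.psi b" by (simp add: zbar_def I.psi_def)
  show ?thesis by unfold_locales (use o in \<open>auto simp: rarr_obj_def zb\<close>)
qed

lemma part1: assumes o: "rarr_obj A B X" shows "pre_torsor A B X (tau_of A X)"
proof -
  interpret I: S2 A B "rT X" "rNA X" "rRA X" "rEtaA X" "rEpsA X" "rNB X" "rRB X" "rEtaB X" "rEpsB X" "rD X" "rDelta X" "rEps X" "rZeta X"
    by (rule obj_S2[OF o])
  have zb: "\<And>b. zbar X b = I.psi b" by (simp add: zbar_def I.psi_def)
  have tt: "tau_of A X = I.tau" by (rule ext) (simp add: tau_of_def I.tau_def I.psii_def zb Let_def)
  have nt: "is_nt B A (fcomp (rRA X) (rNB X)) (fcomp (rRA X) (fcomp (rNB X) (fcomp (rRB X) (fcomp (rNA X) (fcomp (rRA X) (rNB X)))))) I.tau"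
    unfolding is_nt_def
  proof (intro conjI ballI)
    show "is_functor B A (fcomp (rRA X) (rNB X))"
      by (rule functor_comp[OF I.NB.fn I.RA.fn])
    show "is_functor B A (fcomp (rRA X) (fcomp (rNB X) (fcomp (rRB X) (fcomp (rNA X) (fcomp (rRA X) (rNB X))))))"
      by (rule functor_comp[OF functor_comp[OF functor_comp[OF functor_comp[OF functor_comp[OF I.NB.fn I.RA.fn] I.NA.fn] I.RB.fn] I.NB.fn] I.RA.fn])
    fix x assume "x \<in> cobj B" thus "I.tau x \<in> hom A (fo (fcomp (rRA X) (rNB X)) x)
       (fo (fcomp (rRA X) (fcomp (rNB X) (fcomp (rRB X) (fcomp (rNA X) (fcomp (rRA X) (rNB X)))))) x)"
      by (simp add: hom_def)
  next
    fix f assume "f \<in> carr B" thus "ccomp A (I.tau (ccod B f)) (fa (fcomp (rRA X) (rNB X)) f) =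
         ccomp A (fa (fcomp (rRA X) (fcomp (rNB X) (fcomp (rRB X) (fcomp (rNA X) (fcomp (rRA X) (rNB X)))))) f) (I.tau (cdom B f))"
      using I.tau_nat by simp
  qed
  show ?thesis unfolding pre_torsor_def Let_def tt
    using I.adjA I.adjB nt I.ax1 I.ax2 I.ax3 by blast
qed

lemma part2: assumes m: "rarr_mor A B X X' F t"
  shows "pretorsor_mor A B X (tau_of A X) X' (tau_of A X') F"
proof -
  have o: "rarr_obj A B X" "rarr_obj A B X'" and cf: "compatible_functor X X' F" using m by (auto simp: rarr_mor_def)
  interpret M: Mor A B "rT X" "rNA X" "rRA X" "rEtaA X" "rEpsA X" "rNB X" "rRB X" "rEtaB X" "rEpsB X" "rD X" "rDelta X" "rEps X" "rZeta X"
    "rT X'" "rNA X'" "rRA X'" "rEtaA X'" "rEpsA X'" "rNB X'" "rRB X'" "rEtaB X'" "rEpsB X'" "rD X'" "rDelta X'" "rEps X'" "rZeta X'" F t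
    apply (intro Mor.intro obj_S2[OF o(1)] obj_S2[OF o(2)] Mor_axioms.intro)
    using m by (auto simp: rarr_mor_def compatible_functor_def a_of_def)
  have zb: "\<And>b. zbar X b = M.X.psi b" by (simp add: zbar_def M.X.psi_def)
  have tt: "tau_of A X = M.X.tau" by (rule ext) (simp add: tau_of_def M.X.tau_def M.X.psii_def zb Let_def)
  have zb': "\<And>b. zbar X' b = M.Y.psi b" by (simp add: zbar_def M.Y.psi_def)
  have tt': "tau_of A X' = M.Y.tau" by (rule ext) (simp add: tau_of_def M.Y.tau_def M.Y.psii_def zb' Let_def)
  have ab: "a_of X X' F = M.a" "b_of X X' F = M.b" by (auto simp: a_of_def b_of_def M.a_def M.b_def)
  show ?thesis unfolding pretorsor_mor_def Let_def tt tt' ab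
    using cf M.morph by blast
qed

theorem mainTheorem8:
  fixes A :: "('oa,'aa) cat" and B :: "('ob,'ab) cat"
    and X :: "('oa,'aa,'ob,'ab,'ot,'at) rarr"
    and X' :: "('oa,'aa,'ob,'ab,'ot2,'at2) rarr"
    and F :: "('ot2,'at2,'ot,'at) ftor" and t :: "'ob \<Rightarrow> 'ab"
  shows "(rarr_obj A B X \<longrightarrow> pre_torsor A B X (tau_of A X)) \<and>
         (rarr_mor A B X X' F t \<longrightarrow>
            pretorsor_mor A B X (tau_of A X) X' (tau_of A X') F)"
  using part1 part2 by blast

end
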